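(* Let $g_0\neq 0$ and let $s_0\in\mathbb{Z}_{\ge0}^{G^+}$ be given by $s_0(g_0)=1$ and $s_0(g)=0$ for $g\in G^+$, $g\neq g_0$. Then $s_0$ is a vertex of $P(G,g_0)$ and it is adjacent to every other vertex of $P(G,g_0)$.
   Context: Let $G$ be a finite abelian group of order $D$ with zero element $0$, and let $G^+=G\setminus\{0\}$. For $g_0\in G$, let $T(G,g_0)$ be the set of vectors $t=(t(g))_{g\in G^+}\in\mathbb{Z}_{\ge 0}^{G^+}$ with $\sum_{g\in G^+}t(g)g=g_0$ (sum computed in $G$). The master corner polyhedron is $P(G,g_0)=\mathrm{conv}\,T(G,g_0)\subset\mathbb{R}^{G^+}$. Two vertices are adjacent if the segment joining them is an edge (one-dimensional face) of $P(G,g_0)$. *)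

theory Defs
  imports "HOL-Analysis.Analysis"
begin

text \<open>The finite abelian group G is the finite type 'a (class ab_group_add, finite).
  A vector in R^(G^+) is represented as an element t of real^'a with t$0 = 0.\<close>

primrec natmul :: "nat \<Rightarrow> 'a::monoid_add \<Rightarrow> 'a" where
  "natmul 0 g = 0"
| "natmul (Suc n) g = g + natmul n g"

definition corner_points :: "'a::{ab_group_add,finite} \<Rightarrow> (real^'a::{ab_group_add,finite}) set" where
  "corner_points g0 = {t :: real^_. t $ 0 = 0 \<and> (\<forall>g. t $ g \<in> \<nat>) \<and>
      (\<Sum>g\<in>UNIV - {0}. natmul (nat \<lfloor>t $ g\<rfloor>) g) = g0}"

definition master_corner :: "'a::{ab_group_add,finite} \<Rightarrow> (real^'a::{ab_group_add,finite}) set" where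
  "master_corner g0 = convex hull (corner_points g0)"

definition unit_at :: "'a::finite \<Rightarrow> real^'a" where
  "unit_at g0 = (\<chi> g. if g = g0 then 1 else 0)"

definition adjacent_vertices :: "(real^'a::finite) set \<Rightarrow> real^'a \<Rightarrow> real^'a \<Rightarrow> bool" where
  "adjacent_vertices P u v \<longleftrightarrow> u extreme_point_of P \<and> v extreme_point_of P \<and>
      closed_segment u v face_of P \<and> aff_dim (closed_segment u v) = 1"

end

theory Submission
  imports Defs
begin

lemma natmul_add: "natmul (m + n) g = natmul m g + (natmul n g :: 'a::monoid_add)"
  by (induction m) (simp_all add: add.assoc)

lemma natmul_mult: "natmul m g = (0::'a::monoid_add) \<Longrightarrow> natmul (m * k) g = 0"
  by (induction k) (simp_all add: natmul_add)

lemma natmul_period: "\<exists>m>0. natmul m (g::'a::{ab_group_add,finite}) = 0"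
proof -
  have "\<not> inj_on (\<lambda>n. natmul n g) {..CARD('a)}"
  proof
    assume "inj_on (\<lambda>n. natmul n g) {..CARD('a)}"
    then have "card {..CARD('a)} \<le> card (UNIV::'a set)"
      by (rule card_inj_on_le) auto
    then show False by simp
  qed
  then obtain i j where ij: "i \<noteq> j" "natmul i g = natmul j g"
    unfolding inj_on_def by blast
  show ?thesis
  proof (cases "i < j")
    case True
    have "natmul j g = natmul (j - i) g + natmul i g"
      using True by (simp add: natmul_add[symmetric])
    then show ?thesis using True ij by (intro exI[of _ "j-i"]) simp
  next
    case False
    have "natmul i g = natmul (i - j) g + natmul j g"
      using False ij by (simp add: natmul_add[symmetric])
    then show ?thesis using False ij by (intro exI[of _ "i-j"]) simp
  qed
qed

lemma convex_lower: "convex {q::real^'n. \<forall>g. l g \<le> q$g}"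
  unfolding convex_def
proof (clarsimp)
  fix x y :: "real^'n" and u v :: real and g
  assume x: "\<forall>g. l g \<le> x $ g" and y: "\<forall>g. l g \<le> y $ g" and uv: "0 \<le> u" "0 \<le> v" "u + v = 1"
  have "u * l g \<le> u * x$g" by (rule mult_left_mono) (use x uv in auto)
  moreover have "v * l g \<le> v * y$g" by (rule mult_left_mono) (use y uv in auto)
  ultimately show "l g \<le> u * x $ g + v * y $ g" using uv
    by (metis add_mono mult_1 distrib_right)
qed

lemma convex_coord_eq: "convex {q::real^'n. q$i = c}"
  unfolding convex_def by (auto simp: distrib_right[symmetric])

lemma convex_sum_ge: "convex {q::real^'n. 1 \<le> sum (\<lambda>g. q$g) UNIV}"
  unfolding convex_def
proof (clarsimp)
  fix x y :: "real^'n" and u v :: real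
  assume x: "1 \<le> (\<Sum>g\<in>UNIV. x $ g)" and y: "1 \<le> (\<Sum>g\<in>UNIV. y $ g)" and uv: "0 \<le> u" "0 \<le> v" "u + v = 1"
  have "(\<Sum>g\<in>UNIV. u * x $ g + v * y $ g) = u * (\<Sum>g\<in>UNIV. x $ g) + v * (\<Sum>g\<in>UNIV. y $ g)"
    by (simp add: sum.distrib sum_distrib_left)
  moreover have "u * 1 \<le> u * (\<Sum>g\<in>UNIV. x $ g)" by (rule mult_left_mono) (use x uv in auto)
  moreover have "v * 1 \<le> v * (\<Sum>g\<in>UNIV. y $ g)" by (rule mult_left_mono) (use y uv in auto)
  ultimately show "1 \<le> (\<Sum>g\<in>UNIV. u * x $ g + v * y $ g)" using uv by linarith
qed

lemma unit_at_comp [simp]: "unit_at g $ h = (if h = g then 1 else 0)"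
  by (simp add: unit_at_def)

context
  fixes g0 :: "'a::{ab_group_add,finite}"
  assumes g0: "g0 \<noteq> 0"
begin

lemma T_D: assumes "t \<in> corner_points g0"
  shows "t$0 = 0" "t$g \<in> \<nat>" "0 \<le> t$g"
    "(\<Sum>g\<in>UNIV - {0}. natmul (nat \<lfloor>t $ g\<rfloor>) g) = g0"
proof -
  show "t$0 = 0" "t$g \<in> \<nat>" "(\<Sum>g\<in>UNIV - {0}. natmul (nat \<lfloor>t $ g\<rfloor>) g) = g0"
    using assms by (auto simp: corner_points_def)
  then show "0 \<le> t$g" by (auto elim: Nats_cases)
qed

lemma s0_T: "unit_at g0 \<in> corner_points g0"
proof -
  have "(\<Sum>g\<in>UNIV - {0}. natmul (nat \<lfloor>unit_at g0 $ g\<rfloor>) g) = (\<Sum>g\<in>UNIV - {0}. if g = g0 then g0 else 0)"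
    by (rule sum.cong) auto
  also have "\<dots> = g0" using g0 by (simp add: sum.delta')
  finally show ?thesis using g0 by (auto simp: corner_points_def)
qed

lemma T_shift:
  assumes t: "t \<in> corner_points g0" and g: "g \<noteq> 0" and m: "natmul m g = 0"
  shows "t + real (m*k) *\<^sub>R unit_at g \<in> corner_points g0"
proof -
  have "(\<Sum>h\<in>UNIV - {0}. natmul (nat \<lfloor>(t + real (m*k) *\<^sub>R unit_at g) $ h\<rfloor>) h)
      = (\<Sum>h\<in>UNIV - {0}. natmul (nat \<lfloor>t $ h\<rfloor>) h)"
  proof (rule sum.cong)
    fix h :: 'a assume "h \<in> UNIV - {0}"
    show "natmul (nat \<lfloor>(t + real (m*k) *\<^sub>R unit_at g) $ h\<rfloor>) h = natmul (nat \<lfloor>t $ h\<rfloor>) h"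
    proof (cases "h = g")
      case True
      obtain n where n: "t$g = real n" using T_D(2)[OF t, of g] by (auto elim: Nats_cases)
      have "nat \<lfloor>(t + real (m*k) *\<^sub>R unit_at g) $ h\<rfloor> = n + m * k"
      proof -
        have "(t + real (m*k) *\<^sub>R unit_at g) $ h = real (n + m*k)" using True n by simp
        then show ?thesis by (simp only: floor_of_nat nat_int)
      qed
      then show ?thesis using True n natmul_mult[OF m, of k] by (simp add: natmul_add)
    qed simp
  qed simp
  moreover have "\<forall>h. (t + real (m*k) *\<^sub>R unit_at g) $ h \<in> \<nat>"
  proof
    fix h :: 'a
    have "(t + real (m*k) *\<^sub>R unit_at g) $ h = t$h + (if h = g then real (m*k) else 0)" by simp
    also have "\<dots> \<in> \<nat>" using T_D(2)[OF t, of h] by (intro Nats_add) auto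
    finally show "(t + real (m*k) *\<^sub>R unit_at g) $ h \<in> \<nat>" .
  qed
  ultimately show ?thesis using T_D(1,4)[OF t] g
    unfolding corner_points_def by auto
qed


lemma P_up1:
  assumes p: "p \<in> master_corner g0" and g: "g \<noteq> 0" and r: "0 \<le> r"
  shows "p + r *\<^sub>R unit_at g \<in> master_corner g0"
proof (cases "r = 0")
  case True then show ?thesis using p by simp
next
  case False
  obtain m where m: "m > 0" "natmul m g = 0" using natmul_period by blast
  define k where "k = nat \<lceil>r\<rceil>"
  define M where "M = real (m * k)"
  have "r \<le> real k" unfolding k_def by linarith
  also have "real k * 1 \<le> real k * real m" by (rule mult_left_mono) (use m in auto)
  then have "real k \<le> M" unfolding M_def by (simp add: mult.commute)
  finally have rM: "r \<le> M" .
  have Mpos: "M > 0" using rM r False by linarith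
  define w where "w = M *\<^sub>R unit_at g"
  have "(\<lambda>x. w + x) ` corner_points g0 \<subseteq> corner_points g0"
    using T_shift[OF _ g m(2), of _ k] unfolding w_def M_def by (auto simp: add.commute)
  then have "convex hull ((\<lambda>x. w + x) ` corner_points g0) \<subseteq> master_corner g0"
    unfolding master_corner_def by (rule hull_mono)
  moreover have "w + p \<in> convex hull ((\<lambda>x. w + x) ` corner_points g0)"
    using p unfolding master_corner_def convex_hull_translation by blast
  ultimately have "w + p \<in> master_corner g0" by blast
  then have pw: "p + w \<in> master_corner g0" by (simp add: add.commute)
  have cvx: "convex (master_corner g0)" unfolding master_corner_def by simp
  have "(1 - r/M) *\<^sub>R p + (r/M) *\<^sub>R (p + w) \<in> master_corner g0"
    using convexD[OF cvx p pw, of "1 - r/M" "r/M"] rM Mpos r by simp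
  moreover have "(1 - r/M) *\<^sub>R p + (r/M) *\<^sub>R (p + w) = p + r *\<^sub>R unit_at g"
    using Mpos unfolding w_def by (simp add: algebra_simps)
  ultimately show ?thesis by simp
qed

lemma P_up:
  assumes p: "p \<in> master_corner g0" and d: "\<forall>g. 0 \<le> d$g" "d$0 = 0"
  shows "p + d \<in> master_corner g0"
proof -
  have "\<And>A. finite A \<Longrightarrow> A \<subseteq> UNIV - {0} \<Longrightarrow> p + (\<Sum>g\<in>A. d$g *\<^sub>R unit_at g) \<in> master_corner g0"
  proof -
    fix A :: "'a set"
    show "finite A \<Longrightarrow> A \<subseteq> UNIV - {0} \<Longrightarrow> p + (\<Sum>g\<in>A. d$g *\<^sub>R unit_at g) \<in> master_corner g0"
    proof (induction A rule: finite_induct)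
      case empty then show ?case using p by simp
    next
      case (insert x F)
      then have "p + (\<Sum>g\<in>F. d$g *\<^sub>R unit_at g) + d$x *\<^sub>R unit_at x \<in> master_corner g0"
        using d by (intro P_up1) auto
      then show ?case using insert by (simp add: algebra_simps)
    qed
  qed
  from this[of "UNIV - {0}"] have "p + (\<Sum>g\<in>UNIV - {0}. d$g *\<^sub>R unit_at g) \<in> master_corner g0" by simp
  moreover have "(\<Sum>g\<in>UNIV - {0}. d$g *\<^sub>R unit_at g) = d"
  proof (subst vec_eq_iff, intro allI)
    fix h :: 'a
    have "(\<Sum>g\<in>UNIV - {0}. d$g *\<^sub>R unit_at g) $ h = (\<Sum>g\<in>UNIV - {0}. if h = g then d$h else 0)"
      unfolding sum_component by (rule sum.cong) auto
    also have "\<dots> = d$h" using d by (simp add: sum.delta')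
    finally show "(\<Sum>g\<in>UNIV - {0}. d$g *\<^sub>R unit_at g) $ h = d$h" .
  qed
  ultimately show ?thesis by simp
qed

lemma T_sum: assumes t: "t \<in> corner_points g0" shows "1 \<le> (\<Sum>g\<in>UNIV. t$g)"
proof -
  have "t \<noteq> 0"
  proof
    assume "t = 0"
    then have "(\<Sum>g\<in>UNIV - {0}. natmul (nat \<lfloor>t $ g\<rfloor>) g) = 0" by simp
    then show False using T_D(4)[OF t] g0 by simp
  qed
  then obtain h where h: "t$h \<noteq> 0" by (auto simp: vec_eq_iff)
  obtain n where n: "t$h = real n" using T_D(2)[OF t, of h] by (auto elim: Nats_cases)
  have "1 \<le> t$h" using h n by simp
  also have "t$h \<le> (\<Sum>g\<in>UNIV. t$g)" by (rule member_le_sum) (use T_D(3)[OF t] in auto)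
  finally show ?thesis .
qed

lemma P_props:
  assumes p: "p \<in> master_corner g0"
  shows "\<forall>g. 0 \<le> p$g" "p$0 = 0" "1 \<le> (\<Sum>g\<in>UNIV. p$g)"
proof -
  let ?S = "{q::real^'a::{ab_group_add,finite}. \<forall>g. (\<lambda>g. 0) g \<le> q$g} \<inter> {q. q$0 = 0} \<inter> {q. 1 \<le> (\<Sum>g\<in>UNIV. q$g)}"
  have "convex ?S" by (intro convex_Int convex_lower convex_coord_eq convex_sum_ge)
  moreover have "corner_points g0 \<subseteq> ?S" using T_D T_sum by auto
  ultimately have "master_corner g0 \<subseteq> ?S" unfolding master_corner_def by (intro hull_minimal)
  then show "\<forall>g. 0 \<le> p$g" "p$0 = 0" "1 \<le> (\<Sum>g\<in>UNIV. p$g)" using p by auto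
qed

lemma s0_P: "unit_at g0 \<in> master_corner g0"
  using s0_T unfolding master_corner_def by (simp add: hull_inc)

lemma s0_extreme: "unit_at g0 extreme_point_of master_corner g0"
  unfolding extreme_point_of_def
proof (intro conjI s0_P ballI notI)
  fix a b assume a: "a \<in> master_corner g0" and b: "b \<in> master_corner g0"
    and "unit_at g0 \<in> open_segment a b"
  then obtain u where ab: "a \<noteq> b" and u: "0 < u" "u < 1" and x: "unit_at g0 = (1 - u) *\<^sub>R a + u *\<^sub>R b"
    by (auto simp: in_segment)
  have comp: "\<And>g. (if g = g0 then 1 else 0) = (1 - u) * a$g + u * b$g"
    using arg_cong[OF x, of "\<lambda>v. v$g" for g] by simp
  have za: "a$g = 0" "b$g = 0" if "g \<noteq> g0" for g
  proof -
    have "0 = (1 - u) * a$g + u * b$g" using comp[of g] that by simp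
    moreover have "0 \<le> (1-u) * a$g" "0 \<le> u * b$g" using P_props(1)[OF a] P_props(1)[OF b] u by auto
    ultimately have "(1 - u) * a$g = 0" "u * b$g = 0" by linarith+
    then show "a$g = 0" "b$g = 0" using u by auto
  qed
  have sa: "(\<Sum>g\<in>UNIV. a$g) = a$g0" "(\<Sum>g\<in>UNIV. b$g) = b$g0"
  proof -
    have "(\<Sum>g\<in>UNIV. a$g) = (\<Sum>g\<in>UNIV. if g = g0 then a$g0 else 0)"
      by (rule sum.cong) (auto simp: za)
    then show "(\<Sum>g\<in>UNIV. a$g) = a$g0" by simp
    have "(\<Sum>g\<in>UNIV. b$g) = (\<Sum>g\<in>UNIV. if g = g0 then b$g0 else 0)"
      by (rule sum.cong) (auto simp: za)
    then show "(\<Sum>g\<in>UNIV. b$g) = b$g0" by simp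
  qed
  have a1: "1 \<le> a$g0" and b1: "1 \<le> b$g0" using P_props(3)[OF a] P_props(3)[OF b] sa by auto
  have "1 = (1 - u) * a$g0 + u * b$g0" using comp[of g0] by simp
  then have e1: "(1-u) * (a$g0 - 1) + u * (b$g0 - 1) = 0" by (simp add: algebra_simps)
  have e2: "0 \<le> (1-u) * (a$g0 - 1)" using a1 u by simp
  have e3: "0 \<le> u * (b$g0 - 1)" using b1 u by simp
  from e1 e2 e3 have "(1-u) * (a$g0 - 1) = 0" "u * (b$g0 - 1) = 0" by linarith+
  then have "a$g0 = 1" "b$g0 = 1" using u by auto
  then have "a = b" using za unfolding vec_eq_iff by metis
  then show False using ab by simp
qed

lemma vertex_min:
  assumes v: "v extreme_point_of master_corner g0" and p: "p \<in> master_corner g0"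
    and le: "\<forall>g. p$g \<le> v$g"
  shows "p = v"
proof (rule ccontr)
  assume ne: "p \<noteq> v"
  have vP: "v \<in> master_corner g0" using v by (simp add: extreme_point_of_def)
  define d where "d = v - p"
  have d: "\<forall>g. 0 \<le> (2 *\<^sub>R d)$g" "(2 *\<^sub>R d)$0 = 0"
    using le P_props(2)[OF p] P_props(2)[OF vP] by (auto simp: d_def)
  have q: "p + 2 *\<^sub>R d \<in> master_corner g0" by (rule P_up[OF p d])
  have "d \<noteq> 0" using ne by (simp add: d_def)
  then have "p \<noteq> p + 2 *\<^sub>R d" by simp
  moreover have "v = (1 - 1/2) *\<^sub>R p + (1/2) *\<^sub>R (p + 2 *\<^sub>R d)"
    by (simp add: d_def vec_eq_iff algebra_simps)
  ultimately have "v \<in> open_segment p (p + 2 *\<^sub>R d)"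
    unfolding in_segment by (intro conjI exI[of _ "1/2"]) auto
  then show False using v p q by (auto simp: extreme_point_of_def)
qed

lemma vertex_facts:
  assumes v: "v extreme_point_of master_corner g0" and ne: "v \<noteq> unit_at g0"
  shows "v \<in> corner_points g0" "v$g0 = 0" "\<exists>h. h \<noteq> g0 \<and> 0 < v$h"
proof -
  show vT: "v \<in> corner_points g0"
    using v unfolding master_corner_def by (rule extreme_point_of_convex_hull)
  show v0: "v$g0 = 0"
  proof (rule ccontr)
    assume "v$g0 \<noteq> 0"
    moreover obtain n where "v$g0 = real n" using T_D(2)[OF vT, of g0] by (auto elim: Nats_cases)
    ultimately have "1 \<le> v$g0" by simp
    then have "\<forall>g. unit_at g0 $ g \<le> v$g" using T_D(3)[OF vT] by auto
    then have "unit_at g0 = v" by (rule vertex_min[OF v s0_P])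
    then show False using ne by simp
  qed
  have "v \<noteq> 0"
  proof
    assume "v = 0"
    then show False using T_D(4)[OF vT] g0 by simp
  qed
  then obtain h where h: "v$h \<noteq> 0" by (auto simp: vec_eq_iff)
  then show "\<exists>h. h \<noteq> g0 \<and> 0 < v$h" using v0 T_D(3)[OF vT, of h]
    by (intro exI[of _ h]) auto
qed


definition "T0 = {t \<in> corner_points g0. t$g0 = 0}"
definition "T1 = {t \<in> corner_points g0. 1 \<le> t$g0}"

lemma T0_sub: "T0 \<subseteq> corner_points g0" and T1_sub: "T1 \<subseteq> corner_points g0"
  unfolding T0_def T1_def by auto

lemma C0_D: assumes "q \<in> convex hull T0" shows "q \<in> master_corner g0" "q$g0 = 0"
proof -
  have "convex hull T0 \<subseteq> master_corner g0" unfolding master_corner_def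
    by (rule hull_mono[OF T0_sub])
  then show "q \<in> master_corner g0" using assms by blast
  have "T0 \<subseteq> {q. q$g0 = 0}" unfolding T0_def by blast
  then have "convex hull T0 \<subseteq> {q. q$g0 = 0}"
    using hull_minimal[of T0 "{q. q$g0 = 0}" convex] convex_coord_eq by blast
  then show "q$g0 = 0" using assms by blast
qed

lemma C1_D: assumes "q \<in> convex hull T1" shows "unit_at g0 $ g \<le> q$g"
proof -
  have "T1 \<subseteq> {q. \<forall>g. (\<lambda>g. unit_at g0 $ g) g \<le> q$g}"
  proof
    fix t assume "t \<in> T1"
    then have "t \<in> corner_points g0" "1 \<le> t$g0" unfolding T1_def by auto
    then show "t \<in> {q. \<forall>g. (\<lambda>g. unit_at g0 $ g) g \<le> q$g}" using T_D(3) by auto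
  qed
  then have "convex hull T1 \<subseteq> {q. \<forall>g. (\<lambda>g. unit_at g0 $ g) g \<le> q$g}"
    using hull_minimal[of T1 "{q. \<forall>g. (\<lambda>g. unit_at g0 $ g) g \<le> q$g}" convex] convex_lower by blast
  then show ?thesis using assms by blast
qed

lemma decomp:
  assumes vT: "v \<in> corner_points g0" "v$g0 = 0" and p: "p \<in> master_corner g0"
  shows "\<exists>\<alpha>0 \<alpha>1 q0 q1. 0 \<le> \<alpha>0 \<and> 0 \<le> \<alpha>1 \<and> \<alpha>0 + \<alpha>1 = 1 \<and> q0 \<in> convex hull T0
     \<and> q1 \<in> convex hull T1 \<and> p = \<alpha>0 *\<^sub>R q0 + \<alpha>1 *\<^sub>R q1"
proof -
  have "corner_points g0 = T0 \<union> T1"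
  proof
    show "corner_points g0 \<subseteq> T0 \<union> T1"
    proof
      fix t assume t: "t \<in> corner_points g0"
      obtain n where n: "t$g0 = real n" using T_D(2)[OF t, of g0] by (auto elim: Nats_cases)
      show "t \<in> T0 \<union> T1"
      proof (cases "n = 0")
        case True then show ?thesis using t n unfolding T0_def by simp
      next
        case False then show ?thesis using t n unfolding T1_def by simp
      qed
    qed
  qed (use T0_sub T1_sub in blast)
  then have "master_corner g0 = convex hull (convex hull T0 \<union> convex hull T1)"
    unfolding master_corner_def by (metis hull_Un_left hull_Un_right)
  also have "\<dots> = {u *\<^sub>R s + w *\<^sub>R t | u w s t. u \<ge> 0 \<and> w \<ge> 0 \<and> u + w = 1 \<and> s \<in> convex hull T0 \<and> t \<in> convex hull T1}"
  proof (rule convex_hull_union_two)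
    show "convex hull T0 \<noteq> {}" using vT by (auto simp: T0_def)
    show "convex hull T1 \<noteq> {}" using s0_T by (auto simp: T1_def)
  qed auto
  finally show ?thesis using p by blast
qed

lemma face_a:
  assumes v: "v extreme_point_of master_corner g0" and ne: "v \<noteq> unit_at g0"
    and a: "a \<in> master_corner g0" and b: "b \<in> master_corner g0"
    and xF: "x \<in> closed_segment (unit_at g0) v" and xab: "x \<in> open_segment a b"
  shows "a \<in> closed_segment (unit_at g0) v"
proof -
  have vT: "v \<in> corner_points g0" and v0: "v$g0 = 0" using vertex_facts[OF v ne] by auto
  obtain h where h: "h \<noteq> g0" "0 < v$h" using vertex_facts(3)[OF v ne] by auto
  have vP: "v \<in> master_corner g0" using v by (simp add: extreme_point_of_def)
  obtain u where u: "0 \<le> u" "u \<le> 1" and xu: "x = (1 - u) *\<^sub>R unit_at g0 + u *\<^sub>R v"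
    using xF by (auto simp: in_segment)
  obtain \<theta> where th: "0 < \<theta>" "\<theta> < 1" and xth: "x = (1 - \<theta>) *\<^sub>R a + \<theta> *\<^sub>R b"
    using xab by (auto simp: in_segment)
  have "u \<noteq> 0"
  proof
    assume "u = 0"
    then have "x = unit_at g0" using xu by simp
    then show False using s0_extreme a b xab by (auto simp: extreme_point_of_def)
  qed
  with u have upos: "0 < u" by simp
  obtain \<alpha>0 \<alpha>1 a0 a1 where al: "0 \<le> \<alpha>0" "0 \<le> \<alpha>1" "\<alpha>0 + \<alpha>1 = 1" and a0: "a0 \<in> convex hull T0"
    and a1: "a1 \<in> convex hull T1" and ad: "a = \<alpha>0 *\<^sub>R a0 + \<alpha>1 *\<^sub>R a1"
    using decomp[OF vT v0 a] by blast
  obtain \<beta>0 \<beta>1 b0 b1 where be: "0 \<le> \<beta>0" "0 \<le> \<beta>1" "\<beta>0 + \<beta>1 = 1" and b0: "b0 \<in> convex hull T0"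
    and b1: "b1 \<in> convex hull T1" and bd: "b = \<beta>0 *\<^sub>R b0 + \<beta>1 *\<^sub>R b1"
    using decomp[OF vT v0 b] by blast
  define c1 where "c1 = (1 - \<theta>) * \<alpha>0"
  define c2 where "c2 = \<theta> * \<beta>0"
  define c3 where "c3 = (1 - \<theta>) * \<alpha>1"
  define c4 where "c4 = \<theta> * \<beta>1"
  have c13: "c1 + c3 = (1 - \<theta>) * (\<alpha>0 + \<alpha>1)" unfolding c1_def c3_def by (simp add: algebra_simps)
  have c24: "c2 + c4 = \<theta> * (\<beta>0 + \<beta>1)" unfolding c2_def c4_def by (simp add: algebra_simps)
  have c: "0 \<le> c1" "0 \<le> c2" "0 \<le> c3" "0 \<le> c4" "c1 + c2 + c3 + c4 = 1"
    using al be th c13 c24 unfolding c1_def c2_def c3_def c4_def by simp_all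
  have xc: "x$g = c1 * a0$g + c2 * b0$g + c3 * a1$g + c4 * b1$g" for g
  proof -
    have 1: "x$g = (1-\<theta>) * a$g + \<theta> * b$g" using arg_cong[OF xth, of "\<lambda>v. v$g"] by simp
    have 2: "a$g = \<alpha>0 * a0$g + \<alpha>1 * a1$g" using arg_cong[OF ad, of "\<lambda>v. v$g"] by simp
    have 3: "b$g = \<beta>0 * b0$g + \<beta>1 * b1$g" using arg_cong[OF bd, of "\<lambda>v. v$g"] by simp
    show ?thesis unfolding 1 2 3 c1_def c2_def c3_def c4_def by (simp add: algebra_simps)
  qed
  have xs: "x$g = (if g = g0 then 1 - u else 0) + u * v$g" for g
    using xu v0 by auto
  have a0P: "a0 \<in> master_corner g0" and b0P: "b0 \<in> master_corner g0" using C0_D a0 b0 by auto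
  have a00: "a0$g0 = 0" and b00: "b0$g0 = 0" using C0_D a0 b0 by auto
  have a0n: "0 \<le> a0$g" and b0n: "0 \<le> b0$g" for g using P_props(1) a0P b0P by auto
  have a1g: "unit_at g0 $ g \<le> a1$g" and b1g: "unit_at g0 $ g \<le> b1$g" for g using C1_D a1 b1 by auto
  have a1n: "0 \<le> a1$g" and b1n: "0 \<le> b1$g" for g using a1g[of g] b1g[of g] by (auto split: if_splits)
  have a1g0: "1 \<le> a1$g0" and b1g0: "1 \<le> b1$g0" using a1g[of g0] b1g[of g0] by auto
  have "1 - u = c3 * a1$g0 + c4 * b1$g0" using xc[of g0] xs[of g0] a00 b00 v0 by simp
  moreover have "c3 \<le> c3 * a1$g0" "c4 \<le> c4 * b1$g0"
    using a1g0 b1g0 c by (simp_all add: mult_le_cancel_left1)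
  ultimately have su: "u \<le> c1 + c2" using c by linarith
  define s where "s = c1 + c2"
  have spos: "0 < s" using su upos unfolding s_def by linarith
  define y0 where "y0 = (c1 / s) *\<^sub>R a0 + (c2 / s) *\<^sub>R b0"
  have "y0 \<in> convex hull T0"
    unfolding y0_def
    by (rule convexD[OF convex_convex_hull a0 b0]) (use c spos in \<open>auto simp: s_def add_divide_distrib[symmetric]\<close>)
  then have y0P: "y0 \<in> master_corner g0" using C0_D by auto
  have le: "c1 * a0$g + c2 * b0$g \<le> s * v$g" for g
  proof (cases "g = g0")
    case True then show ?thesis using a00 b00 v0 by simp
  next
    case False
    have "c1 * a0$g + c2 * b0$g = u * v$g - c3 * a1$g - c4 * b1$g" using xc[of g] xs[of g] False by simp
    also have "\<dots> \<le> u * v$g"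
    proof -
      have "0 \<le> c3 * a1$g" "0 \<le> c4 * b1$g" using c a1n[of g] b1n[of g] by simp_all
      then show ?thesis by linarith
    qed
    also have "\<dots> \<le> s * v$g" using su T_D(3)[OF vT, of g] unfolding s_def by (simp add: mult_right_mono)
    finally show ?thesis .
  qed
  have "\<forall>g. y0$g \<le> v$g"
  proof
    fix g
    have "y0$g = (c1 * a0$g + c2 * b0$g) / s" unfolding y0_def by (simp add: add_divide_distrib)
    also have "\<dots> \<le> v$g" using le[of g] spos by (simp add: divide_le_eq mult.commute)
    finally show "y0$g \<le> v$g" .
  qed
  then have y0v: "y0 = v" by (rule vertex_min[OF v y0P])
  have eqv: "c1 * a0$g + c2 * b0$g = s * v$g" for g
  proof -
    have "y0$g = (c1 * a0$g + c2 * b0$g) / s" unfolding y0_def by (simp add: add_divide_distrib)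
    then show ?thesis using y0v spos by (simp add: field_simps)
  qed
  have "u * v$h = s * v$h + c3 * a1$h + c4 * b1$h" using xc[of h] xs[of h] eqv[of h] h by simp
  moreover have "0 \<le> c3 * a1$h + c4 * b1$h" using c a1n b1n by simp
  ultimately have "s * v$h \<le> u * v$h" by linarith
  then have "s \<le> u" using h by simp
  then have us: "u = s" using su unfolding s_def by linarith
  have a1z: "c3 * a1$g = 0" if "g \<noteq> g0" for g
  proof -
    have "c3 * a1$g + c4 * b1$g = 0" using xc[of g] xs[of g] eqv[of g] that us by simp
    moreover have "0 \<le> c3 * a1$g" "0 \<le> c4 * b1$g" using c a1n b1n by simp_all
    ultimately show ?thesis by linarith
  qed
  have a1o: "c3 * (a1$g0 - 1) = 0"
  proof -
    have "c3 * a1$g0 + c4 * b1$g0 = 1 - u" using xc[of g0] xs[of g0] a00 b00 v0 by simp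
    moreover have "1 - u = c3 + c4" using c us unfolding s_def by linarith
    ultimately have "c3 * (a1$g0 - 1) + c4 * (b1$g0 - 1) = 0" by (simp add: algebra_simps)
    moreover have "0 \<le> c3 * (a1$g0 - 1)" "0 \<le> c4 * (b1$g0 - 1)" using c a1g0 b1g0 by simp_all
    ultimately show ?thesis by linarith
  qed
  have A1: "\<alpha>1 *\<^sub>R a1 = \<alpha>1 *\<^sub>R unit_at g0"
  proof (cases "\<alpha>1 = 0")
    case False
    then have "c3 \<noteq> 0" using th unfolding c3_def by simp
    then have "a1 = unit_at g0" using a1z a1o unfolding vec_eq_iff by auto
    then show ?thesis by simp
  qed simp
  have A0: "\<alpha>0 *\<^sub>R a0 = \<alpha>0 *\<^sub>R v"
  proof (cases "\<alpha>0 = 0")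
    case False
    then have c1pos: "0 < c1" using th al unfolding c1_def by simp
    have "a0 = v"
    proof (cases "c2 = 0")
      case True
      then show ?thesis using y0v c1pos unfolding y0_def s_def by simp
    next
      case False
      then have c2pos: "0 < c2" using c by simp
      show ?thesis
      proof (rule ccontr)
        assume "a0 \<noteq> v"
        have "a0 \<noteq> b0"
        proof
          assume "a0 = b0"
          then have "y0 = ((c1 + c2) / s) *\<^sub>R a0" unfolding y0_def by (simp add: scaleR_add_left[symmetric] add_divide_distrib)
          then have "y0 = a0" using spos unfolding s_def by simp
          then show False using \<open>a0 \<noteq> v\<close> y0v by simp
        qed
        moreover have "v = (1 - c2/s) *\<^sub>R a0 + (c2/s) *\<^sub>R b0"
          using y0v spos unfolding y0_def s_def by (simp add: field_simps)
        moreover have "0 < c2/s" "c2/s < 1" using c1pos c2pos spos unfolding s_def by auto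
        ultimately have "v \<in> open_segment a0 b0" unfolding in_segment by blast
        then show False using v a0P b0P by (auto simp: extreme_point_of_def)
      qed
    qed
    then show ?thesis by simp
  qed simp
  have "a = (1 - \<alpha>0) *\<^sub>R unit_at g0 + \<alpha>0 *\<^sub>R v"
  proof -
    have "a = \<alpha>0 *\<^sub>R v + \<alpha>1 *\<^sub>R unit_at g0" using ad A0 A1 by simp
    moreover have "\<alpha>1 = 1 - \<alpha>0" using al by simp
    ultimately show ?thesis by (simp add: algebra_simps)
  qed
  then show ?thesis using al unfolding in_segment by (intro exI[of _ \<alpha>0]) auto
qed

end

theorem corollary4:
  fixes g0 :: "'a::{ab_group_add,finite}"
  assumes "g0 \<noteq> 0"
  shows "unit_at g0 extreme_point_of master_corner g0 \<and>
    (\<forall>v. v extreme_point_of master_corner g0 \<and> v \<noteq> unit_at g0 \<longrightarrow>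
         adjacent_vertices (master_corner g0) (unit_at g0) v)"
proof (intro conjI allI impI)
  show s0e: "unit_at g0 extreme_point_of master_corner g0" by (rule s0_extreme[OF assms])
  fix v assume vv: "v extreme_point_of master_corner g0 \<and> v \<noteq> unit_at g0"
  then have v: "v extreme_point_of master_corner g0" and ne: "v \<noteq> unit_at g0" by auto
  have cvx: "convex (master_corner g0)" unfolding master_corner_def by simp
  have vP: "v \<in> master_corner g0" using v by (simp add: extreme_point_of_def)
  have "closed_segment (unit_at g0) v face_of master_corner g0"
    unfolding face_of_def
  proof (intro conjI ballI impI)
    show "closed_segment (unit_at g0) v \<subseteq> master_corner g0"
      by (rule closed_segment_subset[OF s0_P[OF assms] vP cvx])
    show "convex (closed_segment (unit_at g0) v)" by simp
    fix a b x assume a: "a \<in> master_corner g0" and b: "b \<in> master_corner g0"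
      and x: "x \<in> closed_segment (unit_at g0) v" and xab: "x \<in> open_segment a b"
    show "a \<in> closed_segment (unit_at g0) v" by (rule face_a[OF assms v ne a b x xab])
    have "x \<in> open_segment b a" using xab by (simp add: open_segment_commute)
    then show "b \<in> closed_segment (unit_at g0) v" by (rule face_a[OF assms v ne b a x])
  qed
  moreover have "aff_dim (closed_segment (unit_at g0) v) = 1"
    using ne by (simp add: segment_convex_hull aff_dim_convex_hull)
  ultimately show "adjacent_vertices (master_corner g0) (unit_at g0) v"
    unfolding adjacent_vertices_def using s0e v by simp
qed

end
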